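(* Let $T$ be a finite tile set, let $c\in\mathbb{N}$, and let $\tau_1,\tau_2,\dots$ be an infinite sequence of nondecreasing temperature functions such that for each $i$ the size-dependent system $(T,\tau_i)$ self-assembles a $k_i\times h_i$ rectangle with $h_i\le c$, where the widths $k_i$ are pairwise distinct. Let $f(n)=\min_{i\in\mathbb{N}}\tau_i(n)$. Then $f$ is bounded: there is a constant $C$ (e.g. $C=(c+1)g_{\max}$, with $g_{\max}$ the maximum glue strength in $T$) such that $f(n)\le C$ for all $n\in\mathbb{N}$.
   Context: Size-dependent two-handed tile assembly model. A tile type is a quadruple $(g_N,g_E,g_S,g_W)$ of glues from an alphabet $\Sigma$, each glue $g$ having a non-negative integer strength $\mathrm{str}(g)$. A tile is a unit square centered at a point of $\mathbb{Z}^2$ labeled by a tile type; two tiles are adjacent if their centers are at distance 1. An assembly is a partial map $\alpha:\mathbb{Z}^2\to T$ with finite domain $\mathrm{dom}(\alpha)$. Two adjacent tiles form a bond if the glues on their abutting edges are equal and of positive strength; the strength of the bond is that glue's strength. The bond graph of $\alpha$ has vertex set $\mathrm{dom}(\alpha)$ and an edge for each bond. A cut of an assembly is an edge cut of its bond graph (a partition of $\mathrm{dom}(\alpha)$ into two nonempty parts), and its strength is the total strength of bonds crossing it. A supertile $\tilde\alpha$ is the equivalence class of an assembly under translation; its size $|\tilde\alpha|$ is the number of tiles of an assembly in it. A size-dependent system is a pair $(T,\tau)$ with $T$ a finite tile set and $\tau:\mathbb{N}\to\mathbb{N}$ a nondecreasing temperature function. An assembly $\gamma$ is $\tau$-stable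 if every cut partitioning $\mathrm{dom}(\gamma)$ into parts $\alpha,\beta$ has strength at least $\tau(\min(|\alpha|,|\beta|))$. Two supertiles $\tilde\alpha,\tilde\beta$ can combine into $\tilde\gamma$ if there are disjoint assemblies $\alpha\in\tilde\alpha$, $\beta\in\tilde\beta$ with $\alpha\cup\beta=\gamma\in\tilde\gamma$ and the cut separating $\mathrm{dom}(\alpha)$ from $\mathrm{dom}(\beta)$ has strength at least $\tau(\min(|\alpha|,|\beta|))$. A supertile $\tilde\gamma$ can break into $\tilde\alpha,\tilde\beta$ if there are disjoint assemblies $\alpha\in\tilde\alpha,\beta\in\tilde\beta$ with connected bond graphs, $\alpha\cup\beta=\gamma\in\tilde\gamma$, and the cut separating them has strength less than $\tau(\min(|\alpha|,|\beta|))$. A supertile is producible if it is a single tile of a type in $T$, a combination of two producible supertiles, or a result of a break of a producible supertile. A producible supertile is terminal if it can combine with no producible supertile and cannot break. The system self-assembles a shape $P\subseteq\mathbb{Z}^2$ if every terminal supertile has an assembly whose domain is exactly $P$, and at least one terminal supertile exists. A $w\times h$ rectangle is a set $\{x+1,\dots,x+w\}\times\{y+1,\dots,y+h\}$ for some integers $x,y$. *)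

theory Defs
  imports Main
begin

type_synonym 'g tile = "'g \<times> 'g \<times> 'g \<times> 'g"

definition gN :: "'g tile \<Rightarrow> 'g" where "gN t = fst t"
definition gE :: "'g tile \<Rightarrow> 'g" where "gE t = fst (snd t)"
definition gS :: "'g tile \<Rightarrow> 'g" where "gS t = fst (snd (snd t))"
definition gW :: "'g tile \<Rightarrow> 'g" where "gW t = snd (snd (snd t))"

type_synonym pos = "int \<times> int"

type_synonym 'g assembly = "pos \<Rightarrow> 'g tile option"

definition is_assembly :: "'g assembly \<Rightarrow> bool" where
  "is_assembly \<alpha> \<longleftrightarrow> finite (dom \<alpha>)"

definition asize :: "'g assembly \<Rightarrow> nat" where
  "asize \<alpha> = card (dom \<alpha>)"

definition glue_bond :: "('g \<Rightarrow> nat) \<Rightarrow> 'g \<Rightarrow> 'g \<Rightarrow> nat" where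
  "glue_bond str g g' = (if g = g' \<and> str g > 0 then str g else 0)"

definition bond_str :: "('g \<Rightarrow> nat) \<Rightarrow> 'g assembly \<Rightarrow> pos \<Rightarrow> pos \<Rightarrow> nat" where
  "bond_str str \<alpha> p q =
     (case (\<alpha> p, \<alpha> q) of
        (Some s, Some t) \<Rightarrow>
          (if q = (fst p + 1, snd p) then glue_bond str (gE s) (gW t)
           else if q = (fst p - 1, snd p) then glue_bond str (gW s) (gE t)
           else if q = (fst p, snd p + 1) then glue_bond str (gN s) (gS t)
           else if q = (fst p, snd p - 1) then glue_bond str (gS s) (gN t)
           else 0)
      | _ \<Rightarrow> 0)"

definition bonded :: "('g \<Rightarrow> nat) \<Rightarrow> 'g assembly \<Rightarrow> pos \<Rightarrow> pos \<Rightarrow> bool" where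
  "bonded str \<alpha> p q \<longleftrightarrow> bond_str str \<alpha> p q > 0"

definition cut_str :: "('g \<Rightarrow> nat) \<Rightarrow> 'g assembly \<Rightarrow> pos set \<Rightarrow> pos set \<Rightarrow> nat" where
  "cut_str str \<alpha> A B = (\<Sum>(p, q) \<in> A \<times> B. bond_str str \<alpha> p q)"

definition bond_connected :: "('g \<Rightarrow> nat) \<Rightarrow> 'g assembly \<Rightarrow> bool" where
  "bond_connected str \<alpha> \<longleftrightarrow> dom \<alpha> \<noteq> {} \<and>
     (\<forall>p \<in> dom \<alpha>. \<forall>q \<in> dom \<alpha>. (bonded str \<alpha>)\<^sup>*\<^sup>* p q)"

definition translate :: "pos \<Rightarrow> 'g assembly \<Rightarrow> 'g assembly" where
  "translate v \<alpha> = (\<lambda>p. \<alpha> (fst p - fst v, snd p - snd v))"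

definition supertile :: "'g assembly \<Rightarrow> 'g assembly set" where
  "supertile \<alpha> = {translate v \<alpha> | v. True}"

definition can_combine ::
  "('g \<Rightarrow> nat) \<Rightarrow> (nat \<Rightarrow> nat) \<Rightarrow> 'g assembly set \<Rightarrow> 'g assembly set \<Rightarrow> 'g assembly set \<Rightarrow> bool" where
  "can_combine str \<tau> S1 S2 S3 \<longleftrightarrow>
     (\<exists>\<alpha> \<in> S1. \<exists>\<beta> \<in> S2. dom \<alpha> \<inter> dom \<beta> = {} \<and> (\<alpha> ++ \<beta>) \<in> S3 \<and>
        cut_str str (\<alpha> ++ \<beta>) (dom \<alpha>) (dom \<beta>) \<ge> \<tau> (min (asize \<alpha>) (asize \<beta>)))"

definition can_break ::
  "('g \<Rightarrow> nat) \<Rightarrow> (nat \<Rightarrow> nat) \<Rightarrow> 'g assembly set \<Rightarrow> 'g assembly set \<Rightarrow> 'g assembly set \<Rightarrow> bool" where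
  "can_break str \<tau> S S1 S2 \<longleftrightarrow>
     (\<exists>\<alpha> \<in> S1. \<exists>\<beta> \<in> S2. dom \<alpha> \<inter> dom \<beta> = {} \<and>
        bond_connected str \<alpha> \<and> bond_connected str \<beta> \<and> (\<alpha> ++ \<beta>) \<in> S \<and>
        cut_str str (\<alpha> ++ \<beta>) (dom \<alpha>) (dom \<beta>) < \<tau> (min (asize \<alpha>) (asize \<beta>)))"

inductive_set producible ::
  "('g \<Rightarrow> nat) \<Rightarrow> 'g tile set \<Rightarrow> (nat \<Rightarrow> nat) \<Rightarrow> 'g assembly set set"
  for str T \<tau> where
  single: "t \<in> T \<Longrightarrow> supertile [(0, 0) \<mapsto> t] \<in> producible str T \<tau>"
| combine: "S1 \<in> producible str T \<tau> \<Longrightarrow> S2 \<in> producible str T \<tau> \<Longrightarrow>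
    can_combine str \<tau> S1 S2 (supertile \<gamma>) \<Longrightarrow> supertile \<gamma> \<in> producible str T \<tau>"
| break1: "S \<in> producible str T \<tau> \<Longrightarrow>
    can_break str \<tau> S (supertile \<alpha>) (supertile \<beta>) \<Longrightarrow> supertile \<alpha> \<in> producible str T \<tau>"
| break2: "S \<in> producible str T \<tau> \<Longrightarrow>
    can_break str \<tau> S (supertile \<alpha>) (supertile \<beta>) \<Longrightarrow> supertile \<beta> \<in> producible str T \<tau>"

definition terminal ::
  "('g \<Rightarrow> nat) \<Rightarrow> 'g tile set \<Rightarrow> (nat \<Rightarrow> nat) \<Rightarrow> 'g assembly set \<Rightarrow> bool" where
  "terminal str T \<tau> S \<longleftrightarrow> S \<in> producible str T \<tau> \<and>
     \<not> (\<exists>S2 \<in> producible str T \<tau>. \<exists>\<gamma>. can_combine str \<tau> S S2 (supertile \<gamma>)) \<and>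
     \<not> (\<exists>\<alpha> \<beta>. can_break str \<tau> S (supertile \<alpha>) (supertile \<beta>))"

definition self_assembles ::
  "('g \<Rightarrow> nat) \<Rightarrow> 'g tile set \<Rightarrow> (nat \<Rightarrow> nat) \<Rightarrow> pos set \<Rightarrow> bool" where
  "self_assembles str T \<tau> P \<longleftrightarrow>
     (\<forall>S. terminal str T \<tau> S \<longrightarrow> (\<exists>\<alpha> \<in> S. dom \<alpha> = P)) \<and>
     (\<exists>S. terminal str T \<tau> S)"

definition is_rectangle :: "nat \<Rightarrow> nat \<Rightarrow> pos set \<Rightarrow> bool" where
  "is_rectangle w h P \<longleftrightarrow>
     (\<exists>x y. P = {x + 1 .. x + int w} \<times> {y + 1 .. y + int h})"

end

theory Submission
  imports Defs
begin

definition sh :: "pos \<Rightarrow> pos \<Rightarrow> pos" where "sh v p = (fst p + fst v, snd p + snd v)"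

lemma translate_apply: "translate v a p = a (fst p - fst v, snd p - snd v)"
  by (simp add: translate_def)

lemma translate_translate: "translate u (translate v a) = translate (sh u v) a"
  by (rule ext) (simp add: translate_def sh_def algebra_simps)

lemma translate_0: "translate (0,0) a = a"
  by (rule ext) (simp add: translate_def)

lemma translate_inv: "translate (- fst v, - snd v) (translate v a) = a"
  by (simp add: translate_translate sh_def translate_0)

lemma dom_translate: "dom (translate v a) = sh v ` dom a"
proof (intro set_eqI iffI)
  fix p assume "p \<in> dom (translate v a)"
  then have m: "(fst p - fst v, snd p - snd v) \<in> dom a" by (simp add: dom_def translate_def)
  have e: "p = sh v (fst p - fst v, snd p - snd v)" by (simp add: sh_def)
  show "p \<in> sh v ` dom a" using e m by blast
next
  fix p assume "p \<in> sh v ` dom a"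
  then obtain q where "q \<in> dom a" "p = sh v q" by blast
  then show "p \<in> dom (translate v a)" by (simp add: dom_def translate_def sh_def)
qed

lemma ran_translate: "ran (translate v a) = ran a"
proof (intro set_eqI iffI)
  fix b assume "b \<in> ran (translate v a)"
  then obtain p where "translate v a p = Some b" by (auto simp: ran_def)
  then have "a (fst p - fst v, snd p - snd v) = Some b" by (simp add: translate_def)
  then show "b \<in> ran a" by (rule ranI)
next
  fix b assume "b \<in> ran a"
  then obtain q where q: "a q = Some b" by (auto simp: ran_def)
  have "translate v a (sh v q) = a q" by (simp add: translate_def sh_def)
  then have "translate v a (sh v q) = Some b" using q by simp
  then show "b \<in> ran (translate v a)" by (rule ranI)
qed

lemma bond_str_translate:
  "bond_str str (translate v a) p q = bond_str str a (fst p - fst v, snd p - snd v) (fst q - fst v, snd q - snd v)"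
proof -
  have e1: "((fst q - fst v, snd q - snd v) = (fst p - fst v + 1, snd p - snd v)) = (q = (fst p + 1, snd p))"
    by (auto simp: prod_eq_iff)
  have e2: "((fst q - fst v, snd q - snd v) = (fst p - fst v - 1, snd p - snd v)) = (q = (fst p - 1, snd p))"
    by (auto simp: prod_eq_iff)
  have e3: "((fst q - fst v, snd q - snd v) = (fst p - fst v, snd p - snd v + 1)) = (q = (fst p, snd p + 1))"
    by (auto simp: prod_eq_iff)
  have e4: "((fst q - fst v, snd q - snd v) = (fst p - fst v, snd p - snd v - 1)) = (q = (fst p, snd p - 1))"
    by (auto simp: prod_eq_iff)
  show ?thesis
    unfolding bond_str_def translate_apply fst_conv snd_conv e1 e2 e3 e4 ..
qed

lemma bonded_translate:
  "bonded str (translate v a) (sh v p) (sh v q) = bonded str a p q"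
  by (simp add: bonded_def bond_str_translate sh_def)

lemma rtranclp_map:
  assumes "R\<^sup>*\<^sup>* x y" "\<And>u w. R u w \<Longrightarrow> R' (f u) (f w)"
  shows "R'\<^sup>*\<^sup>* (f x) (f y)"
  using assms(1)
proof induction
  case base then show ?case by (rule rtranclp.rtrancl_refl)
next
  case (step y z) then show ?case using rtranclp.rtrancl_into_rtrancl assms(2) by metis
qed

lemma bond_connected_translate:
  assumes "bond_connected str a" shows "bond_connected str (translate v a)"
  unfolding bond_connected_def
proof (intro conjI ballI)
  show "dom (translate v a) \<noteq> {}" using assms by (simp add: bond_connected_def dom_translate)
  fix p q assume "p \<in> dom (translate v a)" "q \<in> dom (translate v a)"
  then obtain p' q' where "p' \<in> dom a" "q' \<in> dom a" "p = sh v p'" "q = sh v q'"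
    unfolding dom_translate by blast
  note pq = this
  have "(bonded str a)\<^sup>*\<^sup>* p' q'" using assms pq unfolding bond_connected_def by blast
  then have "(bonded str (translate v a))\<^sup>*\<^sup>* (sh v p') (sh v q')"
    by (rule rtranclp_map) (simp add: bonded_translate)
  then show "(bonded str (translate v a))\<^sup>*\<^sup>* p q" using pq by simp
qed

lemma supertile_transfer:
  assumes "a \<in> supertile g" "P a" "\<And>v b. P b \<Longrightarrow> P (translate v b)" "b \<in> supertile g"
  shows "P b"
proof -
  obtain u where u: "a = translate u g" using assms(1) by (auto simp: supertile_def)
  obtain w where w: "b = translate w g" using assms(4) by (auto simp: supertile_def)
  have "g = translate (- fst u, - snd u) a" using u translate_inv by metis
  then have "b = translate w (translate (- fst u, - snd u) a)" using w by simp
  then show ?thesis using assms(2,3) by simp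
qed

lemma self_in_supertile: "a \<in> supertile a"
proof -
  have "a = translate (0,0) a" by (simp add: translate_0)
  then show ?thesis unfolding supertile_def by blast
qed

lemma bond_str_sym: "bond_str str a p q = bond_str str a q p"
proof -
  have gs: "\<And>g g'. glue_bond str g g' = glue_bond str g' g" by (auto simp: glue_bond_def)
  obtain p1 p2 q1 q2 where pq: "p = (p1, p2)" "q = (q1, q2)" by (cases p, cases q)
  show ?thesis
  proof (cases "a p")
    case None then show ?thesis by (simp add: bond_str_def split: option.splits)
  next
    case (Some s) note s = this
    show ?thesis
    proof (cases "a q")
      case None then show ?thesis using s by (simp add: bond_str_def)
    next
      case (Some t)
      consider "q1 = p1 + 1 \<and> q2 = p2" | "q1 = p1 - 1 \<and> q2 = p2" | "q1 = p1 \<and> q2 = p2 + 1"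
        | "q1 = p1 \<and> q2 = p2 - 1"
        | "\<not> (q1 = p1 + 1 \<and> q2 = p2) \<and> \<not> (q1 = p1 - 1 \<and> q2 = p2) \<and> \<not> (q1 = p1 \<and> q2 = p2 + 1) \<and> \<not> (q1 = p1 \<and> q2 = p2 - 1)"
        by blast
      then show ?thesis
        by cases (use s Some pq in \<open>auto simp: bond_str_def gs\<close>)
    qed
  qed
qed

lemma bonded_sym: "bonded str a p q \<Longrightarrow> bonded str a q p"
  by (simp add: bonded_def bond_str_sym)

lemma rtranclp_sym:
  assumes "R\<^sup>*\<^sup>* x y" "\<And>u w. R u w \<Longrightarrow> R w u"
  shows "R\<^sup>*\<^sup>* y x"
  using assms(1) by induction (auto intro: converse_rtranclp_into_rtranclp assms(2))

lemma bond_str_pos_dom: "bond_str str a p q > 0 \<Longrightarrow> p \<in> dom a \<and> q \<in> dom a"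
  unfolding bond_str_def by (auto split: option.splits)

lemma bond_str_cong: "a p = b p \<Longrightarrow> a q = b q \<Longrightarrow> bond_str str a p q = bond_str str b p q"
  unfolding bond_str_def by simp

lemma bonded_le: "bonded str a p q \<Longrightarrow> a \<subseteq>\<^sub>m b \<Longrightarrow> bonded str b p q"
proof -
  assume h: "bonded str a p q" "a \<subseteq>\<^sub>m b"
  then have "p \<in> dom a" "q \<in> dom a" using bond_str_pos_dom bonded_def by metis+
  then have "a p = b p" "a q = b q" using h(2) by (auto simp: map_le_def)
  then show ?thesis using h(1) bond_str_cong bonded_def by metis
qed

lemma connected_le:
  assumes "bond_connected str a" "a \<subseteq>\<^sub>m b" "p \<in> dom a" "q \<in> dom a"
  shows "(bonded str b)\<^sup>*\<^sup>* p q"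
proof -
  have "(bonded str a)\<^sup>*\<^sup>* p q" using assms(1,3,4) unfolding bond_connected_def by blast
  then have "(bonded str b)\<^sup>*\<^sup>* (id p) (id q)"
    by (rule rtranclp_map) (simp add: bonded_le assms(2))
  then show ?thesis by simp
qed

definition invT :: "'g tile set \<Rightarrow> 'g assembly \<Rightarrow> bool" where
  "invT T a \<longleftrightarrow> finite (dom a) \<and> dom a \<noteq> {} \<and> ran a \<subseteq> T"

lemma invT_translate: "invT T a \<Longrightarrow> invT T (translate v a)"
  by (simp add: invT_def dom_translate ran_translate)

lemma ran_add_disj: "dom a \<inter> dom b = {} \<Longrightarrow> ran (a ++ b) = ran a \<union> ran b"
  by (rule ran_map_add)

lemma invA:
  assumes "S \<in> producible str T \<tau>"
  shows "S \<noteq> {} \<and> (\<forall>a\<in>S. invT T a)"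
  using assms
proof induction
  case (single t)
  have "invT T [(0,0) \<mapsto> t]" using single by (simp add: invT_def)
  then show ?case using supertile_transfer[of _ "[(0,0) \<mapsto> t]" "invT T"] self_in_supertile invT_translate
    by blast
next
  case (combine S1 S2 \<gamma>)
  then obtain a b where ab: "a \<in> S1" "b \<in> S2" "dom a \<inter> dom b = {}" "a ++ b \<in> supertile \<gamma>"
    unfolding can_combine_def by blast
  have "invT T a" "invT T b" using ab combine by auto
  then have "invT T (a ++ b)" using ab(3) by (auto simp: invT_def ran_add_disj)
  then show ?case using supertile_transfer[of _ \<gamma> "invT T"] ab(4) invT_translate by blast
next
  case (break1 S \<alpha> \<beta>)
  then obtain a b where ab: "a \<in> supertile \<alpha>" "dom a \<inter> dom b = {}" "bond_connected str a" "a ++ b \<in> S"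
    unfolding can_break_def by blast
  have "invT T (a ++ b)" using ab break1 by auto
  then have "invT T a" using ab(2,3) by (auto simp: invT_def ran_add_disj bond_connected_def)
  then show ?case using supertile_transfer[of _ \<alpha> "invT T"] ab(1) invT_translate by blast
next
  case (break2 S \<alpha> \<beta>)
  then obtain a b where ab: "b \<in> supertile \<beta>" "dom a \<inter> dom b = {}" "bond_connected str b" "a ++ b \<in> S"
    unfolding can_break_def by blast
  have "invT T (a ++ b)" using ab break2 by auto
  then have "invT T b" using ab(2,3) by (auto simp: invT_def ran_add_disj bond_connected_def)
  then show ?case using supertile_transfer[of _ \<beta> "invT T"] ab(1) invT_translate by blast
qed

lemma invB:
  assumes "S \<in> producible str T \<tau>" "\<And>m. m \<ge> 1 \<Longrightarrow> \<tau> m \<ge> 1"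
  shows "\<forall>a\<in>S. bond_connected str a"
  using assms(1)
proof induction
  case (single t)
  have "bond_connected str [(0,0) \<mapsto> t]" by (simp add: bond_connected_def)
  then show ?case using supertile_transfer[of _ "[(0,0) \<mapsto> t]" "bond_connected str"]
      self_in_supertile bond_connected_translate by blast
next
  case (combine S1 S2 \<gamma>)
  then obtain a b where ab: "a \<in> S1" "b \<in> S2" "dom a \<inter> dom b = {}" "a ++ b \<in> supertile \<gamma>"
    and cut: "cut_str str (a ++ b) (dom a) (dom b) \<ge> \<tau> (min (asize a) (asize b))"
    unfolding can_combine_def by blast
  have ia: "invT T a" "invT T b" using ab invA combine by blast+
  have ca: "bond_connected str a" "bond_connected str b" using ab combine by auto
  have "asize a \<ge> 1" "asize b \<ge> 1" using ia by (auto simp: invT_def asize_def Suc_le_eq card_gt_0_iff)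
  then have "cut_str str (a ++ b) (dom a) (dom b) \<ge> 1" using cut assms(2)[of "min (asize a) (asize b)"] by linarith
  then obtain p q where pq: "p \<in> dom a" "q \<in> dom b" "bond_str str (a ++ b) p q > 0"
  proof -
    assume c1: "cut_str str (a ++ b) (dom a) (dom b) \<ge> 1"
    have "\<exists>x \<in> dom a \<times> dom b. bond_str str (a ++ b) (fst x) (snd x) > 0"
    proof (rule ccontr)
      assume "\<not> ?thesis"
      then have "\<forall>x \<in> dom a \<times> dom b. (\<lambda>(p, q). bond_str str (a ++ b) p q) x = 0" by auto
      then have "cut_str str (a ++ b) (dom a) (dom b) = 0" unfolding cut_str_def by (rule sum.neutral)
      then show False using c1 by simp
    qed
    then obtain x where "x \<in> dom a \<times> dom b" "bond_str str (a ++ b) (fst x) (snd x) > 0" by blast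
    then show "(\<And>p q. p \<in> dom a \<Longrightarrow> q \<in> dom b \<Longrightarrow> bond_str str (a ++ b) p q > 0 \<Longrightarrow> thesis) \<Longrightarrow> thesis"
      by (metis mem_Times_iff)
  qed
  have le1: "a \<subseteq>\<^sub>m a ++ b" using ab(3) by (metis map_add_comm map_le_map_add)
  have le2: "b \<subseteq>\<^sub>m a ++ b" by simp
  let ?R = "bonded str (a ++ b)"
  have s: "\<And>u w. ?R u w \<Longrightarrow> ?R w u" by (rule bonded_sym)
  have pq': "?R p q" using pq by (simp add: bonded_def)
  have ra: "\<And>u. u \<in> dom a \<Longrightarrow> ?R\<^sup>*\<^sup>* u p \<and> ?R\<^sup>*\<^sup>* p u" using connected_le[OF ca(1) le1] pq(1) by blast
  have rb: "\<And>u. u \<in> dom b \<Longrightarrow> ?R\<^sup>*\<^sup>* u q \<and> ?R\<^sup>*\<^sup>* q u" using connected_le[OF ca(2) le2] pq(2) by blast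
  have pq2: "?R\<^sup>*\<^sup>* p q" "?R\<^sup>*\<^sup>* q p" using pq' s[OF pq'] by auto
  have "bond_connected str (a ++ b)"
    unfolding bond_connected_def
  proof (intro conjI ballI)
    show "dom (a ++ b) \<noteq> {}" using pq by auto
    fix u w
    have tp: "?R\<^sup>*\<^sup>* x p \<and> ?R\<^sup>*\<^sup>* p x" if "x \<in> dom (a ++ b)" for x
    proof (cases "x \<in> dom a")
      case True then show ?thesis using ra by blast
    next
      case False then have "x \<in> dom b" using that by auto
      then have "?R\<^sup>*\<^sup>* x q" "?R\<^sup>*\<^sup>* q x" using rb by blast+
      then show ?thesis using pq2 rtranclp_trans[of ?R x q p] rtranclp_trans[of ?R p q x] by blast
    qed
    assume u: "u \<in> dom (a ++ b)" and w: "w \<in> dom (a ++ b)"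
    have "?R\<^sup>*\<^sup>* u p" using tp[OF u] by (rule conjunct1)
    moreover have "?R\<^sup>*\<^sup>* p w" using tp[OF w] by (rule conjunct2)
    ultimately
    show "?R\<^sup>*\<^sup>* u w" by (rule rtranclp_trans)
  qed
  then show ?case using supertile_transfer[of _ \<gamma> "bond_connected str"] ab(4) bond_connected_translate by blast
next
  case (break1 S \<alpha> \<beta>)
  then obtain a b where ab: "a \<in> supertile \<alpha>" "bond_connected str a"
    unfolding can_break_def by blast
  then show ?case using supertile_transfer[of _ \<alpha> "bond_connected str"] bond_connected_translate by blast
next
  case (break2 S \<alpha> \<beta>)
  then obtain a b where ab: "b \<in> supertile \<beta>" "bond_connected str b"
    unfolding can_break_def by blast
  then show ?case using supertile_transfer[of _ \<beta> "bond_connected str"] bond_connected_translate by blast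
qed

lemma bond_str_adj:
  assumes "bond_str str a p q > 0"
  shows "\<bar>fst q - fst p\<bar> + \<bar>snd q - snd p\<bar> = 1"
proof (rule ccontr)
  assume n: "\<bar>fst q - fst p\<bar> + \<bar>snd q - snd p\<bar> \<noteq> 1"
  have "q \<noteq> (fst p + 1, snd p)" "q \<noteq> (fst p - 1, snd p)" "q \<noteq> (fst p, snd p + 1)" "q \<noteq> (fst p, snd p - 1)"
    using n by auto
  then have "bond_str str a p q = 0" unfolding bond_str_def by (simp split: option.split)
  then show False using assms by simp
qed

definition gmax :: "'g tile set \<Rightarrow> ('g \<Rightarrow> nat) \<Rightarrow> nat" where
  "gmax T str = Max (str ` (\<Union>t\<in>T. {gN t, gE t, gS t, gW t}))"

lemma glue_le: "finite T \<Longrightarrow> t \<in> T \<Longrightarrow> g \<in> {gN t, gE t, gS t, gW t} \<Longrightarrow> str g \<le> gmax T str"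
  unfolding gmax_def by (rule Max_ge) auto

lemma glue_bond_le: "glue_bond str g g' \<le> str g"
  by (simp add: glue_bond_def)

lemma bond_str_le:
  assumes "finite T" "ran a \<subseteq> T"
  shows "bond_str str a p q \<le> gmax T str"
proof (cases "a p")
  case None then show ?thesis by (simp add: bond_str_def)
next
  case (Some s)
  then have sT: "s \<in> T" using assms(2) ranI[where m=a and a=p, OF Some] by blast
  have b: "\<And>g g'. g \<in> {gN s, gE s, gS s, gW s} \<Longrightarrow> glue_bond str g g' \<le> gmax T str"
    using glue_le[OF assms(1) sT] glue_bond_le order_trans by metis
  show ?thesis
  proof (cases "a q")
    case None then show ?thesis using Some by (simp add: bond_str_def)
  next
    case (Some t)
    then show ?thesis using \<open>a p = Some s\<close> b by (simp add: bond_str_def)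
  qed
qed

lemma int_iv: "\<bar>c - b\<bar> \<le> (1::int) \<Longrightarrow> min a c \<le> z \<Longrightarrow> z \<le> max a c \<Longrightarrow> (min a b \<le> z \<and> z \<le> max a b) \<or> z = c"
  unfolding min_def max_def abs_le_iff by (auto split: if_splits)

lemma interval_lemma:
  assumes "R\<^sup>*\<^sup>* a b" "a \<in> S"
    "\<And>u w. R u w \<Longrightarrow> u \<in> S \<Longrightarrow> w \<in> S \<and> \<bar>fst w - fst u\<bar> \<le> (1::int)"
  shows "b \<in> S \<and> {min (fst a) (fst b) .. max (fst a) (fst b)} \<subseteq> fst ` S"
  using assms(1)
proof induction
  case base then show ?case using assms(2) by auto
next
  case (step b c)
  then have c: "c \<in> S" "\<bar>fst c - fst b\<bar> \<le> 1" using assms(3) by auto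
  have "{min (fst a) (fst c) .. max (fst a) (fst c)} \<subseteq> {min (fst a) (fst b) .. max (fst a) (fst b)} \<union> {fst c}"
  proof
    fix z assume "z \<in> {min (fst a) (fst c) .. max (fst a) (fst c)}"
    then have "min (fst a) (fst c) \<le> z" "z \<le> max (fst a) (fst c)" by auto
    then show "z \<in> {min (fst a) (fst b) .. max (fst a) (fst b)} \<union> {fst c}"
      using int_iv[OF c(2), of "fst a" z] by auto
  qed
  moreover have "fst c \<in> fst ` S" using c(1) by blast
  ultimately show ?case using step c(1) by blast
qed

lemma exit_edge:
  assumes "R\<^sup>*\<^sup>* a b" "a \<in> X" "b \<notin> X"
  shows "\<exists>u w. R u w \<and> u \<in> X \<and> w \<notin> X"
  using assms by induction auto

lemma bonded_restrict:
  "u \<in> A \<Longrightarrow> w \<in> A \<Longrightarrow> bonded str (m |` A) u w = bonded str m u w"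
  unfolding bonded_def by (rule arg_cong[where f="\<lambda>x. x > 0"], rule bond_str_cong) auto

lemma bonded_rtr_sym: "(bonded str a)\<^sup>*\<^sup>* p q \<Longrightarrow> (bonded str a)\<^sup>*\<^sup>* q p"
  by (erule rtranclp_sym) (erule bonded_sym)

lemma main_cut:
  fixes \<gamma> :: "'g assembly" and x y :: int and K H n :: nat
  assumes dP: "dom \<gamma> = {x+1..x+int K} \<times> {y+1..y+int H}"
    and conn: "bond_connected str \<gamma>"
    and ranT: "ran \<gamma> \<subseteq> T" and fT: "finite T"
    and K: "K \<ge> 2*n+2" and H: "H \<ge> 1"
  shows "\<exists>A B. A \<union> B = dom \<gamma> \<and> A \<inter> B = {} \<and> bond_connected str (\<gamma> |` A) \<and>
     bond_connected str (\<gamma> |` B) \<and> n \<le> card A \<and> n \<le> card B \<and> cut_str str \<gamma> A B \<le> H * gmax T str"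
proof -
  define P where "P = dom \<gamma>"
  define j where "j = x + int (n+1)"
  define R where "R = bonded str \<gamma>"
  define L where "L = {p \<in> P. fst p \<le> j}"
  define RL where "RL = (\<lambda>u w. R u w \<and> u \<in> L \<and> w \<in> L)"
  define p0 where "p0 = (x+1, y+1)"
  define X where "X = {u. RL\<^sup>*\<^sup>* p0 u}"
  define RC where "RC = (\<lambda>u w. R u w \<and> u \<notin> X \<and> w \<notin> X)"
  define q0 where "q0 = (x + int K, y+1)"
  define C where "C = {u. RC\<^sup>*\<^sup>* q0 u}"
  define B where "B = P - C"
  have finP: "finite P" using dP P_def by simp
  have Rsym: "\<And>u w. R u w \<Longrightarrow> R w u" unfolding R_def by (rule bonded_sym)
  have Rdom: "\<And>u w. R u w \<Longrightarrow> u \<in> P \<and> w \<in> P" unfolding R_def P_def bonded_def by (rule bond_str_pos_dom)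
  have Radj: "\<And>u w. R u w \<Longrightarrow> \<bar>fst w - fst u\<bar> + \<bar>snd w - snd u\<bar> = 1"
    unfolding R_def bonded_def by (rule bond_str_adj)
  have Rconn: "\<And>u w. u \<in> P \<Longrightarrow> w \<in> P \<Longrightarrow> R\<^sup>*\<^sup>* u w"
    using conn unfolding bond_connected_def R_def P_def by blast
  have p0P: "p0 \<in> P" using H K unfolding dP P_def p0_def by auto
  have p0L: "p0 \<in> L" using p0P unfolding L_def j_def p0_def by auto
  have q0P: "q0 \<in> P" using H K unfolding dP P_def q0_def by auto
  have q0L: "q0 \<notin> L" using K unfolding L_def j_def q0_def by auto
  have XL: "X \<subseteq> L"
  proof
    fix u assume "u \<in> X"
    then have "RL\<^sup>*\<^sup>* p0 u" by (simp add: X_def)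
    then show "u \<in> L" by (induction rule: rtranclp_induct) (use p0L in \<open>auto simp: RL_def\<close>)
  qed
  have p0X: "p0 \<in> X" by (simp add: X_def)
  have Xstep: "\<And>u w. u \<in> X \<Longrightarrow> RL u w \<Longrightarrow> w \<in> X"
    unfolding X_def by (auto intro: rtranclp.rtrancl_into_rtrancl)
  have q0X: "q0 \<notin> X" using XL q0L by blast
  have CX: "\<And>u. u \<in> C \<Longrightarrow> u \<notin> X"
  proof -
    fix u assume "u \<in> C"
    then have "RC\<^sup>*\<^sup>* q0 u" by (simp add: C_def)
    then show "u \<notin> X" by (induction rule: rtranclp_induct) (use q0X in \<open>auto simp: RC_def\<close>)
  qed
  have q0C: "q0 \<in> C" by (simp add: C_def)
  have CP: "C \<subseteq> P"
  proof
    fix u assume "u \<in> C"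
    then have "RC\<^sup>*\<^sup>* q0 u" by (simp add: C_def)
    then show "u \<in> P" by (induction rule: rtranclp_induct) (use q0P Rdom in \<open>auto simp: RC_def\<close>)
  qed
  have Cstep: "\<And>u w. u \<in> C \<Longrightarrow> RC u w \<Longrightarrow> w \<in> C"
    unfolding C_def by (auto intro: rtranclp.rtrancl_into_rtrancl)
  have p0C: "p0 \<notin> C" using CX p0X by blast
  have p0B: "p0 \<in> B" using p0C p0P by (simp add: B_def)
  have XB: "X \<subseteq> B" using XL CX unfolding B_def L_def by blast
  have finB: "finite B" "finite C" using finP CP unfolding B_def by (auto intro: finite_subset)
  have RLsym: "\<And>u w. RL u w \<Longrightarrow> RL w u" unfolding RL_def using Rsym by blast
  have RCsym: "\<And>u w. RC u w \<Longrightarrow> RC w u" unfolding RC_def using Rsym by blast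

  have key: "w \<in> X \<and> u \<notin> L \<and> fst u = j + 1 \<and> w = (fst u - 1, snd u)"
    if r: "R u w" and u: "u \<in> C" and w: "w \<notin> C" for u w
  proof -
    have uX: "u \<notin> X" using CX u by blast
    have wX: "w \<in> X"
    proof (rule ccontr)
      assume "w \<notin> X"
      then have "RC u w" using r uX by (simp add: RC_def)
      then have "w \<in> C" using Cstep u by blast
      then show False using w by simp
    qed
    have uL: "u \<notin> L"
    proof
      assume "u \<in> L"
      then have "RL w u" using r Rsym wX XL by (auto simp: RL_def)
      then have "u \<in> X" using Xstep wX by blast
      then show False using uX by simp
    qed
    have "u \<in> P" "w \<in> P" using Rdom r by auto
    then have a1: "fst u > j" using uL by (auto simp: L_def)
    have a2: "fst w \<le> j" using wX XL by (auto simp: L_def)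
    have a3: "\<bar>fst w - fst u\<bar> + \<bar>snd w - snd u\<bar> = 1" using Radj r by blast
    have "fst w = fst u - 1 \<and> snd w = snd u \<and> fst u = j + 1" using a1 a2 a3 by arith
    then show ?thesis using wX uL by (simp add: prod_eq_iff)
  qed

  have dC: "dom (\<gamma> |` C) = C" using CP by (auto simp: P_def)
  have dB: "dom (\<gamma> |` B) = B" by (auto simp: P_def B_def)
  have Cpath: "(bonded str (\<gamma> |` C))\<^sup>*\<^sup>* q0 u" if "RC\<^sup>*\<^sup>* q0 u" for u
    using that
  proof (induction rule: rtranclp_induct)
    case base then show ?case by simp
  next
    case (step v u)
    have "v \<in> C" "u \<in> C" using step(1) Cstep[of v u] step(2) by (auto simp: C_def)
    moreover have "R v u" using step(2) by (simp add: RC_def)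
    ultimately have "bonded str (\<gamma> |` C) v u" by (simp add: bonded_restrict R_def)
    with step(3) show ?case by (rule rtranclp.rtrancl_into_rtrancl)
  qed
  have connC: "bond_connected str (\<gamma> |` C)"
    unfolding bond_connected_def
  proof (intro conjI ballI)
    show "dom (\<gamma> |` C) \<noteq> {}" using dC q0C by auto
    fix u w assume "u \<in> dom (\<gamma> |` C)" "w \<in> dom (\<gamma> |` C)"
    then have "RC\<^sup>*\<^sup>* q0 u" "RC\<^sup>*\<^sup>* q0 w" using dC by (auto simp: C_def)
    then have "(bonded str (\<gamma> |` C))\<^sup>*\<^sup>* q0 u" "(bonded str (\<gamma> |` C))\<^sup>*\<^sup>* q0 w" using Cpath by auto
    then have "(bonded str (\<gamma> |` C))\<^sup>*\<^sup>* u q0" "(bonded str (\<gamma> |` C))\<^sup>*\<^sup>* q0 w"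
      using bonded_rtr_sym by blast+
    then show "(bonded str (\<gamma> |` C))\<^sup>*\<^sup>* u w" by (rule rtranclp_trans)
  qed

  have Xpath: "(bonded str (\<gamma> |` B))\<^sup>*\<^sup>* p0 u" if "RL\<^sup>*\<^sup>* p0 u" for u
    using that
  proof (induction rule: rtranclp_induct)
    case base then show ?case by simp
  next
    case (step v u)
    have "v \<in> X" "u \<in> X" using step(1) Xstep[of v u] step(2) by (auto simp: X_def)
    then have "v \<in> B" "u \<in> B" using XB by auto
    moreover have "R v u" using step(2) by (simp add: RL_def)
    ultimately have "bonded str (\<gamma> |` B) v u" by (simp add: bonded_restrict R_def)
    with step(3) show ?case by (rule rtranclp.rtrancl_into_rtrancl)
  qed
  have claim: "u \<in> C \<or> (bonded str (\<gamma> |` B))\<^sup>*\<^sup>* u p0" if "R\<^sup>*\<^sup>* u p0" for u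
    using that
  proof (induction rule: converse_rtranclp_induct)
    case base then show ?case by simp
  next
    case (step u v)
    show ?case
    proof (cases "u \<in> X")
      case True
      then have "(bonded str (\<gamma> |` B))\<^sup>*\<^sup>* p0 u" using Xpath by (simp add: X_def)
      then show ?thesis using bonded_rtr_sym by blast
    next
      case uX: False
      show ?thesis
      proof (cases "u \<in> C")
        case True then show ?thesis by simp
      next
        case uC: False
        have vC: "v \<notin> C"
        proof
          assume vC: "v \<in> C"
          then have "RC v u" using CX uX Rsym step(1) by (auto simp: RC_def)
          then show False using Cstep vC uC by blast
        qed
        then have pv: "(bonded str (\<gamma> |` B))\<^sup>*\<^sup>* v p0" using step(3) by simp
        have "u \<in> B" "v \<in> B" using Rdom step(1) uC vC by (auto simp: B_def)
        then have "bonded str (\<gamma> |` B) u v" using step(1) by (simp add: bonded_restrict R_def)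
        then show ?thesis using pv by (auto intro: converse_rtranclp_into_rtranclp)
      qed
    qed
  qed
  have connB: "bond_connected str (\<gamma> |` B)"
    unfolding bond_connected_def
  proof (intro conjI ballI)
    show "dom (\<gamma> |` B) \<noteq> {}" using dB p0B by auto
    fix u w assume "u \<in> dom (\<gamma> |` B)" "w \<in> dom (\<gamma> |` B)"
    then have "u \<in> B" "w \<in> B" using dB by auto
    then have "(bonded str (\<gamma> |` B))\<^sup>*\<^sup>* u p0" "(bonded str (\<gamma> |` B))\<^sup>*\<^sup>* w p0"
      using claim[OF Rconn[OF _ p0P]] unfolding B_def by blast+
    then have "(bonded str (\<gamma> |` B))\<^sup>*\<^sup>* u p0" "(bonded str (\<gamma> |` B))\<^sup>*\<^sup>* p0 w"
      using bonded_rtr_sym by blast+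
    then show "(bonded str (\<gamma> |` B))\<^sup>*\<^sup>* u w" by (rule rtranclp_trans)
  qed

  have sizeB: "n \<le> card B"
  proof -
    obtain u w where uw: "R u w" "u \<in> X" "w \<notin> X"
      using exit_edge[OF Rconn[OF p0P q0P] p0X q0X] by blast
    have wL: "w \<notin> L"
    proof
      assume "w \<in> L"
      then have "RL u w" using uw XL by (auto simp: RL_def)
      then show False using Xstep uw by blast
    qed
    have "w \<in> P" using Rdom uw by blast
    then have "fst w > j" using wL by (auto simp: L_def)
    moreover have "fst u \<le> j" using uw XL by (auto simp: L_def)
    moreover have "\<bar>fst w - fst u\<bar> + \<bar>snd w - snd u\<bar> = 1" using Radj uw by blast
    ultimately have fu: "fst u = j" by arith
    have "RL\<^sup>*\<^sup>* p0 u" using uw by (simp add: X_def)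
    then have "u \<in> X \<and> {min (fst p0) (fst u) .. max (fst p0) (fst u)} \<subseteq> fst ` X"
    proof (rule interval_lemma)
      show "p0 \<in> X" by (rule p0X)
      fix v z assume "RL v z" "v \<in> X"
      then show "z \<in> X \<and> \<bar>fst z - fst v\<bar> \<le> 1" using Xstep Radj[of v z]
        by (auto simp: RL_def)
    qed
    then have "{x+1 .. j} \<subseteq> fst ` X" using fu by (simp add: p0_def j_def)
    then have "card {x+1 .. j} \<le> card (fst ` X)"
      using finB XB by (meson card_mono finite_imageI finite_subset)
    also have "\<dots> \<le> card X" using finB XB by (meson card_image_le finite_subset)
    also have "\<dots> \<le> card B" using finB XB by (meson card_mono)
    finally show ?thesis by (simp add: j_def)
  qed

  have sizeC: "n \<le> card C"
  proof -
    obtain u w where uw: "R u w" "u \<in> C" "w \<notin> C"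
      using exit_edge[OF Rconn[OF q0P p0P] q0C p0C] by blast
    have fu: "fst u = j + 1" using key uw by blast
    have "RC\<^sup>*\<^sup>* q0 u" using uw by (simp add: C_def)
    then have "RC\<^sup>*\<^sup>* u q0" using rtranclp_sym RCsym by metis
    then have "q0 \<in> C \<and> {min (fst u) (fst q0) .. max (fst u) (fst q0)} \<subseteq> fst ` C"
    proof (rule interval_lemma)
      show "u \<in> C" by (rule uw(2))
      fix v z assume "RC v z" "v \<in> C"
      then show "z \<in> C \<and> \<bar>fst z - fst v\<bar> \<le> 1" using Cstep Radj[of v z]
        by (auto simp: RC_def)
    qed
    moreover have "min (fst u) (fst q0) = j + 1" "max (fst u) (fst q0) = x + int K"
      using fu K by (auto simp: q0_def j_def)
    ultimately have "{j + 1 .. x + int K} \<subseteq> fst ` C" by simp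
    then have "card {j + 1 .. x + int K} \<le> card (fst ` C)"
      using finB by (meson card_mono finite_imageI)
    also have "\<dots> \<le> card C" using finB by (meson card_image_le)
    finally show ?thesis using K by (simp add: j_def)
  qed

  have cut: "cut_str str \<gamma> C B \<le> H * gmax T str"
  proof -
    define g where "g = (\<lambda>(p::pos, q::pos). bond_str str \<gamma> p q)"
    define f where "f = (\<lambda>y'::int. ((j+1, y'), (j, y')))"
    define Col where "Col = {y+1..y+int H}"
    have finCB: "finite (C \<times> B)" using finB by simp
    have zero: "\<forall>z \<in> C \<times> B - (C \<times> B \<inter> f ` Col). g z = 0"
    proof
      fix z assume z: "z \<in> C \<times> B - (C \<times> B \<inter> f ` Col)"
      obtain u w where zz: "z = (u, w)" by (cases z)
      show "g z = 0"
      proof (rule ccontr)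
        assume "g z \<noteq> 0"
        then have r: "R u w" using zz by (simp add: g_def R_def bonded_def)
        have "u \<in> C" "w \<in> B" using z zz by auto
        then have "w \<notin> C" by (simp add: B_def)
        then have k: "fst u = j + 1 \<and> w = (fst u - 1, snd u)" using key r \<open>u \<in> C\<close> by blast
        have "u \<in> P" using Rdom r by blast
        then have "snd u \<in> Col" unfolding Col_def P_def dP by auto
        moreover have "z = f (snd u)" using k zz by (simp add: f_def prod_eq_iff)
        ultimately show False using z by auto
      qed
    qed
    have "cut_str str \<gamma> C B = sum g (C \<times> B)" by (simp add: cut_str_def g_def)
    also have "\<dots> = sum g (C \<times> B \<inter> f ` Col)"
      using finCB zero by (intro sum.mono_neutral_right) auto
    also have "\<dots> \<le> sum g (f ` Col)"
      by (rule sum_mono2) (auto simp: Col_def)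
    also have "\<dots> \<le> sum (g \<circ> f) Col"
      by (rule sum_image_le) (auto simp: Col_def)
    also have "\<dots> \<le> sum (\<lambda>_. gmax T str) Col"
      by (rule sum_mono) (auto simp: g_def f_def intro: bond_str_le[OF fT ranT])
    also have "\<dots> = H * gmax T str" by (simp add: Col_def)
    finally show ?thesis .
  qed
  have "C \<union> B = dom \<gamma>" "C \<inter> B = {}" using CP by (auto simp: B_def P_def)
  then show ?thesis using connC connB sizeB sizeC cut by blast
qed

lemma tau_pos:
  assumes trm: "terminal str T \<tau> S" and g: "\<gamma> \<in> S" and inv: "invT T \<gamma>"
  shows "\<tau> 1 \<ge> 1"
proof (rule ccontr)
  assume "\<not> \<tau> 1 \<ge> 1"
  then have t0: "\<tau> 1 = 0" by simp
  have fin: "finite (dom \<gamma>)" and ne: "dom \<gamma> \<noteq> {}" and rT: "ran \<gamma> \<subseteq> T" using inv by (auto simp: invT_def)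
  obtain p0 where "p0 \<in> dom \<gamma>" using ne by blast
  then obtain t where "\<gamma> p0 = Some t" by blast
  then have tT: "t \<in> T" using rT ranI[where m=\<gamma> and a=p0] by blast
  define M where "M = Max (fst ` dom \<gamma>)"
  define v where "v = (M + 2, 0::int)"
  define \<beta> where "\<beta> = translate v [(0,0) \<mapsto> t]"
  have dbeta: "dom \<beta> = {v}"
    by (auto simp: \<beta>_def translate_def dom_def v_def prod_eq_iff split: if_splits)
  have le: "\<And>p. p \<in> dom \<gamma> \<Longrightarrow> fst p \<le> M" unfolding M_def using fin by (auto intro: Max_ge)
  have vn: "v \<notin> dom \<gamma>" using le[of v] by (auto simp: v_def)
  have disj: "dom \<gamma> \<inter> dom \<beta> = {}" using vn dbeta by auto
  have zero: "\<forall>z \<in> dom \<gamma> \<times> dom \<beta>. (\<lambda>(p, q). bond_str str (\<gamma> ++ \<beta>) p q) z = 0"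
  proof
    fix z assume z: "z \<in> dom \<gamma> \<times> dom \<beta>"
    obtain p q where zz: "z = (p, q)" by (cases z)
    have "p \<in> dom \<gamma>" "q = v" using z zz dbeta by auto
    then have "fst q - fst p \<ge> 2" using le by (auto simp: v_def)
    then have "\<not> bond_str str (\<gamma> ++ \<beta>) p q > 0" using bond_str_adj[of str "\<gamma> ++ \<beta>" p q] by arith
    then show "(\<lambda>(p, q). bond_str str (\<gamma> ++ \<beta>) p q) z = 0" using zz by simp
  qed
  have cut0: "cut_str str (\<gamma> ++ \<beta>) (dom \<gamma>) (dom \<beta>) = 0"
    unfolding cut_str_def using zero by (rule sum.neutral)
  have "asize \<beta> = 1" by (simp add: asize_def dbeta)
  moreover have "asize \<gamma> \<ge> 1" using fin ne by (simp add: asize_def Suc_le_eq card_gt_0_iff)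
  ultimately have "min (asize \<gamma>) (asize \<beta>) = 1" by simp
  then have tl: "\<tau> (min (asize \<gamma>) (asize \<beta>)) \<le> cut_str str (\<gamma> ++ \<beta>) (dom \<gamma>) (dom \<beta>)"
    using t0 cut0 by simp
  have bs: "\<beta> \<in> supertile [(0,0) \<mapsto> t]" unfolding supertile_def \<beta>_def by blast
  have cc: "can_combine str \<tau> S (supertile [(0,0) \<mapsto> t]) (supertile (\<gamma> ++ \<beta>))"
    unfolding can_combine_def using g bs disj tl self_in_supertile[of "\<gamma> ++ \<beta>"] by blast
  have "supertile [(0,0) \<mapsto> t] \<in> producible str T \<tau>" using tT by (rule producible.single)
  then show False using trm cc unfolding terminal_def by blast
qed

theorem theorem2:
  fixes T :: "'g tile set" and str :: "'g \<Rightarrow> nat" and c :: nat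
    and \<tau> :: "nat \<Rightarrow> nat \<Rightarrow> nat" and k h :: "nat \<Rightarrow> nat"
  assumes "finite T"
    and "\<And>i. mono (\<tau> i)"
    and "\<And>i. \<exists>P. is_rectangle (k i) (h i) P \<and> self_assembles str T (\<tau> i) P"
    and "\<And>i. h i \<le> c"
    and "inj k"
  shows "\<exists>C. \<forall>n. (INF i. \<tau> i n) \<le> C"
proof (intro exI allI)
  fix n
  have "finite (k -` {..2*n+2})" using assms(5) by (intro finite_vimageI) auto
  then obtain i where "i \<notin> k -` {..2*n+2}" using ex_new_if_finite[OF infinite_UNIV_nat] by blast
  then have Ki: "k i \<ge> 2*n+2" by simp
  obtain P where rect: "is_rectangle (k i) (h i) P" and sa: "self_assembles str T (\<tau> i) P"
    using assms(3) by blast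
  obtain x y where dP: "P = {x + 1 .. x + int (k i)} \<times> {y + 1 .. y + int (h i)}"
    using rect unfolding is_rectangle_def by blast
  obtain S where trm: "terminal str T (\<tau> i) S" using sa unfolding self_assembles_def by blast
  obtain \<gamma> where g: "\<gamma> \<in> S" and dg: "dom \<gamma> = P" using sa trm unfolding self_assembles_def by blast
  have prodS: "S \<in> producible str T (\<tau> i)" using trm by (simp add: terminal_def)
  have inv: "invT T \<gamma>" using invA[OF prodS] g by blast
  have t1: "\<tau> i 1 \<ge> 1" using tau_pos[OF trm g inv] .
  have tpos: "\<And>m. m \<ge> 1 \<Longrightarrow> \<tau> i m \<ge> 1" using t1 assms(2)[of i] by (meson monoD order_trans)
  have conn: "bond_connected str \<gamma>" using invB[OF prodS tpos] g by blast
  have "P \<noteq> {}" using inv dg by (simp add: invT_def)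
  then have H1: "h i \<ge> 1" using dP by (cases "h i") auto
  obtain A B where AB: "A \<union> B = dom \<gamma>" "A \<inter> B = {}" "bond_connected str (\<gamma> |` A)"
     "bond_connected str (\<gamma> |` B)" "n \<le> card A" "n \<le> card B" "cut_str str \<gamma> A B \<le> h i * gmax T str"
    using main_cut[OF dg[unfolded dP] conn _ assms(1) Ki H1] inv by (auto simp: invT_def)
  define a where "a = \<gamma> |` A"
  define b where "b = \<gamma> |` B"
  have da: "dom a = A" using AB(1) by (auto simp: a_def)
  have db: "dom b = B" using AB(1) by (auto simp: b_def)
  have ab: "a ++ b = \<gamma>"
  proof (rule ext)
    have nn: "\<And>p. p \<notin> A \<Longrightarrow> p \<notin> B \<Longrightarrow> \<gamma> p = None" proof -
      fix p assume "p \<notin> A" "p \<notin> B"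
      then have "p \<notin> dom \<gamma>" using AB(1) by blast
      then show "\<gamma> p = None" by (metis domIff)
    qed
    fix p show "(a ++ b) p = \<gamma> p"
      using AB(1) by (cases "p \<in> B"; cases "p \<in> A") (auto simp: a_def b_def map_add_def nn split: option.splits)
  qed
  have "\<not> can_break str (\<tau> i) S (supertile a) (supertile b)" using trm by (auto simp: terminal_def)
  then have "\<not> cut_str str (a ++ b) (dom a) (dom b) < \<tau> i (min (asize a) (asize b))"
  proof -
    assume nb: "\<not> can_break str (\<tau> i) S (supertile a) (supertile b)"
    have h: "a \<in> supertile a" "b \<in> supertile b" "dom a \<inter> dom b = {}" "bond_connected str a"
      "bond_connected str b" "a ++ b \<in> S"
      using self_in_supertile[of a] self_in_supertile[of b] AB(2,3,4) da db ab g
      by (auto simp: a_def b_def)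
    show ?thesis using nb h unfolding can_break_def by blast
  qed
  then have "\<tau> i (min (card A) (card B)) \<le> cut_str str \<gamma> A B" using ab da db by (simp add: asize_def)
  moreover have "\<tau> i n \<le> \<tau> i (min (card A) (card B))" using assms(2)[of i] AB(5,6) by (simp add: monoD)
  moreover have "h i * gmax T str \<le> c * gmax T str" using assms(4)[of i] by simp
  ultimately have "\<tau> i n \<le> c * gmax T str" using AB(7) by linarith
  moreover have "(INF i. \<tau> i n) \<le> \<tau> i n" by (rule cINF_lower) (auto simp: bdd_below_def)
  ultimately show "(INF i. \<tau> i n) \<le> c * gmax T str" by linarith
qed

end
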